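(* Let $(X,\tau,I)$ be a $*$-extremally disconnected ideal topological space and $\gamma$ an operation on $\tau$ such that $(X,\tau)$ is $\gamma$-regular. For $V\subseteq X$ the following are equivalent: (1) $V$ is $\gamma$-open; (2) $V$ is $\alpha$-$I$-open and locally closed; (3) $V$ is pre-$\gamma$-$I$-open and locally closed; (4) $V$ is pre-$I$-open and locally closed; (5) $V$ is semi-$I$-open and locally closed; (6) $V$ is $b$-$I$-open and locally closed.
   Context: Let $(X,\tau)$ be a topological space; $Cl$ and $Int$ denote closure and interior in $\tau$. An ideal on $X$ is a nonempty family $I$ of subsets of $X$ such that $A\in I$, $B\subseteq A$ imply $B\in I$, and $A,B\in I$ imply $A\cup B\in I$; $(X,\tau,I)$ is then called an ideal topological space. An operation on $\tau$ is a map $\gamma:\tau\to P(X)$ with $V\subseteq\gamma(V)$ for all $V\in\tau$. A subset $A\subseteq X$ is $\gamma$-open if for every $x\in A$ there is $U\in\tau$ with $x\in U$ and $\gamma(U)\subseteq A$; $\tau_\gamma$ denotes the family of $\gamma$-open sets (so $\tau_\gamma\subseteq\tau$), and complements of $\gamma$-open sets are $\gamma$-closed. $\tau_\gamma\text{-}Int(A)$ is the union of all $\gamma$-open sets contained in $A$, and $\tau_\gamma\text{-}Cl(A)$ is the intersection of all $\gamma$-closed sets containing $A$. The local function of $A$ is $A^*=\{x\in X: U\cap A\notin I \text{ for every } U\in\tau \text{ with } x\in U\}$, and $Cl^*(A)=A\cup A^*$ (the closure operator of a topology $\tau^*$ finer than $\tau$). A subset $A$ is pre-$\gamma$-$I$-open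 if $A\subseteq \tau_\gamma\text{-}Int(Cl^*(A))$. The space $(X,\tau)$ is $\gamma$-regular if for each $x\in X$ and each open $V$ containing $x$ there is an open $U$ containing $x$ with $\gamma(U)\subseteq V$ (equivalently, $\tau_\gamma=\tau$). $(X,\tau,I)$ is $*$-extremally disconnected if $Cl^*(V)$ is open for every open $V\subseteq X$ (equivalently, $Cl^*(Int(V))\subseteq Int(Cl^*(V))$ for every $V\subseteq X$). A set $A$ is: $\alpha$-$I$-open if $A\subseteq Int(Cl^*(Int(A)))$; pre-$I$-open if $A\subseteq Int(Cl^*(A))$; semi-$I$-open if $A\subseteq Cl^*(Int(A))$; $b$-$I$-open if $A\subseteq Int(Cl^*(A))\cup Cl^*(Int(A))$; locally closed if $A=U\cap K$ for some open $U$ and some closed $K$ in $(X,\tau)$. *)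

theory Defs
  imports "HOL-Analysis.Analysis"
begin

definition ideal_on :: "'a set \<Rightarrow> 'a set set \<Rightarrow> bool" where
  "ideal_on X I \<longleftrightarrow> I \<noteq> {} \<and> (\<forall>A\<in>I. A \<subseteq> X)
     \<and> (\<forall>A B. A \<in> I \<and> B \<subseteq> A \<longrightarrow> B \<in> I)
     \<and> (\<forall>A B. A \<in> I \<and> B \<in> I \<longrightarrow> A \<union> B \<in> I)"

definition operation_on :: "'a topology \<Rightarrow> ('a set \<Rightarrow> 'a set) \<Rightarrow> bool" where
  "operation_on T \<gamma> \<longleftrightarrow> (\<forall>V. openin T V \<longrightarrow> V \<subseteq> \<gamma> V \<and> \<gamma> V \<subseteq> topspace T)"

definition gamma_open :: "'a topology \<Rightarrow> ('a set \<Rightarrow> 'a set) \<Rightarrow> 'a set \<Rightarrow> bool" where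
  "gamma_open T \<gamma> A \<longleftrightarrow> A \<subseteq> topspace T \<and>
     (\<forall>x\<in>A. \<exists>U. openin T U \<and> x \<in> U \<and> \<gamma> U \<subseteq> A)"

definition gamma_int :: "'a topology \<Rightarrow> ('a set \<Rightarrow> 'a set) \<Rightarrow> 'a set \<Rightarrow> 'a set" where
  "gamma_int T \<gamma> A = \<Union>{U. gamma_open T \<gamma> U \<and> U \<subseteq> A}"

definition gamma_regular :: "'a topology \<Rightarrow> ('a set \<Rightarrow> 'a set) \<Rightarrow> bool" where
  "gamma_regular T \<gamma> \<longleftrightarrow> (\<forall>x V. openin T V \<and> x \<in> V \<longrightarrow>
     (\<exists>U. openin T U \<and> x \<in> U \<and> \<gamma> U \<subseteq> V))"

definition local_fun :: "'a topology \<Rightarrow> 'a set set \<Rightarrow> 'a set \<Rightarrow> 'a set" where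
  "local_fun T I A = {x \<in> topspace T. \<forall>U. openin T U \<and> x \<in> U \<longrightarrow> U \<inter> A \<notin> I}"

definition cl_star :: "'a topology \<Rightarrow> 'a set set \<Rightarrow> 'a set \<Rightarrow> 'a set" where
  "cl_star T I A = A \<union> local_fun T I A"

definition star_extremally_disconnected :: "'a topology \<Rightarrow> 'a set set \<Rightarrow> bool" where
  "star_extremally_disconnected T I \<longleftrightarrow> (\<forall>V. openin T V \<longrightarrow> openin T (cl_star T I V))"

definition pre_gamma_I_open :: "'a topology \<Rightarrow> 'a set set \<Rightarrow> ('a set \<Rightarrow> 'a set) \<Rightarrow> 'a set \<Rightarrow> bool" where
  "pre_gamma_I_open T I \<gamma> A \<longleftrightarrow> A \<subseteq> gamma_int T \<gamma> (cl_star T I A)"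

definition alpha_I_open :: "'a topology \<Rightarrow> 'a set set \<Rightarrow> 'a set \<Rightarrow> bool" where
  "alpha_I_open T I A \<longleftrightarrow> A \<subseteq> T interior_of (cl_star T I (T interior_of A))"

definition pre_I_open :: "'a topology \<Rightarrow> 'a set set \<Rightarrow> 'a set \<Rightarrow> bool" where
  "pre_I_open T I A \<longleftrightarrow> A \<subseteq> T interior_of (cl_star T I A)"

definition semi_I_open :: "'a topology \<Rightarrow> 'a set set \<Rightarrow> 'a set \<Rightarrow> bool" where
  "semi_I_open T I A \<longleftrightarrow> A \<subseteq> cl_star T I (T interior_of A)"

definition b_I_open :: "'a topology \<Rightarrow> 'a set set \<Rightarrow> 'a set \<Rightarrow> bool" where
  "b_I_open T I A \<longleftrightarrow> A \<subseteq> T interior_of (cl_star T I A) \<union> cl_star T I (T interior_of A)"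

definition locally_closed_in :: "'a topology \<Rightarrow> 'a set \<Rightarrow> bool" where
  "locally_closed_in T A \<longleftrightarrow> (\<exists>U K. openin T U \<and> closedin T K \<and> A = U \<inter> K)"

end

theory Submission
  imports Defs
begin

lemma ideal_empty: "ideal_on X I \<Longrightarrow> {} \<in> I"
  unfolding ideal_on_def by blast

lemma cl_star_sub: "A \<subseteq> cl_star T I A"
  unfolding cl_star_def by blast

lemma cl_star_mono:
  assumes "ideal_on X I" "A \<subseteq> B"
  shows "cl_star T I A \<subseteq> cl_star T I B"
proof -
  have "local_fun T I A \<subseteq> local_fun T I B"
  proof
    fix x assume x: "x \<in> local_fun T I A"
    show "x \<in> local_fun T I B"
      unfolding local_fun_def
    proof (safe)
      show "x \<in> topspace T" using x unfolding local_fun_def by blast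
    next
      fix U assume U: "openin T U" "x \<in> U" "U \<inter> B \<in> I"
      have "U \<inter> A \<subseteq> U \<inter> B" using assms(2) by blast
      hence "U \<inter> A \<in> I" using U(3) assms(1) unfolding ideal_on_def by blast
      thus False using x U unfolding local_fun_def by blast
    qed
  qed
  thus ?thesis using assms(2) unfolding cl_star_def by blast
qed

lemma cl_star_closed:
  assumes "ideal_on X I" "closedin T K" "A \<subseteq> K"
  shows "cl_star T I A \<subseteq> K"
proof -
  have "local_fun T I A \<subseteq> K"
  proof
    fix x assume x: "x \<in> local_fun T I A"
    show "x \<in> K"
    proof (rule ccontr)
      assume "x \<notin> K"
      moreover have "openin T (topspace T - K)" using assms(2) by blast
      moreover have "(topspace T - K) \<inter> A = {}" using assms(3) by blast
      ultimately show False using x ideal_empty[OF assms(1)] unfolding local_fun_def by auto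
    qed
  qed
  thus ?thesis using assms(3) unfolding cl_star_def by blast
qed

lemma lc_pre_open:
  assumes "ideal_on X I" "locally_closed_in T V" "V \<subseteq> T interior_of (cl_star T I V)"
  shows "openin T V"
proof -
  obtain U K where UK: "openin T U" "closedin T K" "V = U \<inter> K"
    using assms(2) unfolding locally_closed_in_def by blast
  have VK: "V \<subseteq> K" "V \<subseteq> U" using UK(3) by auto
  have "cl_star T I V \<subseteq> K" by (rule cl_star_closed[OF assms(1) UK(2) VK(1)])
  hence "T interior_of (cl_star T I V) \<subseteq> K" using interior_of_subset order_trans by metis
  hence "V = U \<inter> T interior_of (cl_star T I V)" using assms(3) UK(3) VK by auto
  thus ?thesis using UK(1) by (metis openin_Int openin_interior_of)
qed

lemma lc_semi_open:
  assumes "ideal_on X I" "star_extremally_disconnected T I"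
    "locally_closed_in T V" "V \<subseteq> cl_star T I (T interior_of V)"
  shows "openin T V"
proof -
  obtain U K where UK: "openin T U" "closedin T K" "V = U \<inter> K"
    using assms(3) unfolding locally_closed_in_def by blast
  have VK: "V \<subseteq> K" "V \<subseteq> U" using UK(3) by auto
  have "T interior_of V \<subseteq> K" using interior_of_subset VK(1) order_trans by metis
  hence "cl_star T I (T interior_of V) \<subseteq> K" by (rule cl_star_closed[OF assms(1) UK(2)])
  hence "V = U \<inter> cl_star T I (T interior_of V)" using assms(4) UK(3) VK by auto
  moreover have "openin T (cl_star T I (T interior_of V))"
    using assms(2) unfolding star_extremally_disconnected_def by simp
  ultimately show ?thesis using UK(1) by (metis openin_Int)
qed

theorem theorem3p35:
  fixes T :: "'a topology" and I :: "'a set set" and \<gamma> :: "'a set \<Rightarrow> 'a set" and V :: "'a set"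
  assumes "ideal_on (topspace T) I"
    and "star_extremally_disconnected T I"
    and "operation_on T \<gamma>"
    and "gamma_regular T \<gamma>"
    and "V \<subseteq> topspace T"
  shows "(gamma_open T \<gamma> V \<longleftrightarrow> alpha_I_open T I V \<and> locally_closed_in T V)
       \<and> (gamma_open T \<gamma> V \<longleftrightarrow> pre_gamma_I_open T I \<gamma> V \<and> locally_closed_in T V)
       \<and> (gamma_open T \<gamma> V \<longleftrightarrow> pre_I_open T I V \<and> locally_closed_in T V)
       \<and> (gamma_open T \<gamma> V \<longleftrightarrow> semi_I_open T I V \<and> locally_closed_in T V)
       \<and> (gamma_open T \<gamma> V \<longleftrightarrow> b_I_open T I V \<and> locally_closed_in T V)"
proof -
  have go: "gamma_open T \<gamma> A \<longleftrightarrow> openin T A" for A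
  proof
    assume g: "gamma_open T \<gamma> A"
    show "openin T A"
    proof (subst openin_subopen, intro ballI)
      fix x assume "x \<in> A"
      then obtain U where U: "openin T U" "x \<in> U" "\<gamma> U \<subseteq> A"
        using g unfolding gamma_open_def by blast
      have "U \<subseteq> \<gamma> U" using assms(3) U(1) unfolding operation_on_def by blast
      thus "\<exists>U. openin T U \<and> x \<in> U \<and> U \<subseteq> A" using U by blast
    qed
  next
    assume o: "openin T A"
    show "gamma_open T \<gamma> A" unfolding gamma_open_def
    proof (intro conjI ballI)
      show "A \<subseteq> topspace T" using o by (rule openin_subset)
    next
      fix x assume "x \<in> A"
      thus "\<exists>U. openin T U \<and> x \<in> U \<and> \<gamma> U \<subseteq> A"
        using o assms(4) unfolding gamma_regular_def by simp
    qed
  qed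
  have gi: "gamma_int T \<gamma> A = T interior_of A" for A
    unfolding gamma_int_def interior_of_def go by blast
  have lc: "openin T V \<Longrightarrow> locally_closed_in T V"
    unfolding locally_closed_in_def by (metis closedin_topspace inf.absorb1 openin_subset)
  have sub: "V \<subseteq> cl_star T I V" by (rule cl_star_sub)
  have pre1: "openin T V \<Longrightarrow> V \<subseteq> T interior_of (cl_star T I V)"
    using sub by (meson interior_of_maximal)
  have semi1: "openin T V \<Longrightarrow> V \<subseteq> cl_star T I (T interior_of V)"
    using sub by (simp add: interior_of_openin)
  have alpha2pre: "alpha_I_open T I V \<Longrightarrow> pre_I_open T I V"
    unfolding alpha_I_open_def pre_I_open_def
    using cl_star_mono[OF assms(1) interior_of_subset[of T V], of T]
    by (meson interior_of_mono order_trans)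
  have ed: "cl_star T I (T interior_of V) \<subseteq> T interior_of (cl_star T I V)"
    using assms(2) cl_star_mono[OF assms(1) interior_of_subset[of T V], of T]
    unfolding star_extremally_disconnected_def
    by (meson interior_of_maximal openin_interior_of)
  have P: "openin T V \<longleftrightarrow> V \<subseteq> T interior_of (cl_star T I V) \<and> locally_closed_in T V"
    using lc pre1 lc_pre_open[OF assms(1), of T V] by blast
  have S: "openin T V \<longleftrightarrow> V \<subseteq> cl_star T I (T interior_of V) \<and> locally_closed_in T V"
    using lc semi1 lc_semi_open[OF assms(1) assms(2), of V] by blast
  have A: "openin T V \<longleftrightarrow> alpha_I_open T I V \<and> locally_closed_in T V"
  proof
    assume o: "openin T V"
    hence "T interior_of V = V" by (simp add: interior_of_openin)
    thus "alpha_I_open T I V \<and> locally_closed_in T V"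
      using o pre1 lc unfolding alpha_I_open_def by simp
  next
    assume "alpha_I_open T I V \<and> locally_closed_in T V"
    thus "openin T V" using alpha2pre P unfolding pre_I_open_def by blast
  qed
  have B: "openin T V \<longleftrightarrow> b_I_open T I V \<and> locally_closed_in T V"
    using P ed unfolding b_I_open_def by blast
  show ?thesis
    unfolding go pre_gamma_I_open_def gi pre_I_open_def semi_I_open_def
    using P S A B by blast
qed

end
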